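(* Let $A\in\mathbb{R}_+^{n\times n}$ have all entries strictly positive. Then the following are equivalent: (i) $\frac{1}{n}\sum_{i=1}^n\sum_{j=1}^n a_{i,j}=\max_{B\in\Omega(A)}\rho(B)$; (ii) either the all-ones vector $(1,\dots,1)^T$ is an eigenvector of $A$ for the eigenvalue $\rho(A)$ (equivalently, all row sums of $A$ are equal), or there exists a nonsingular nonnegative diagonal matrix $D=\mathrm{diag}(d_1,\dots,d_n)$ such that $DA$ is the all-ones matrix, i.e. $d_i a_{i,j}=1$ for all $i,j$; (iii) $\frac{1}{n}\sum_{i=1}^n\sum_{j=1}^n a_{i,j}=\min_{B\in\Omega(A)}\rho(B)$.
   Context: For $A=(a_{i,j})\in\mathbb{R}_+^{n\times n}$ (nonnegative $n\times n$ matrices), $\Omega(A)=\{B\in\mathbb{R}_+^{n\times n}:\ \forall i\ \exists\text{ a permutation }\phi_i\text{ of }\{1,\dots,n\}\text{ with } b_{i,j}=a_{i,\phi_i(j)}\ \forall j\}$, the set of matrices whose rows are rearrangements of the corresponding rows of $A$. $\rho(B)$ denotes the spectral radius (Perron root) of $B$. *)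

theory Defs
  imports "Jordan_Normal_Form.Spectral_Radius" "Jordan_Normal_Form.Determinant"
begin

definition Omega :: "nat \<Rightarrow> real mat \<Rightarrow> real mat set" where
  "Omega n A = {B \<in> carrier_mat n n. \<forall>i<n. \<exists>\<phi>. \<phi> permutes {..<n} \<and>
                   (\<forall>j<n. B $$ (i, j) = A $$ (i, \<phi> j))}"

definition rho :: "real mat \<Rightarrow> real" where
  "rho B = spectral_radius (map_mat complex_of_real B)"

end

theory Submission
  imports Defs
begin

lemma mult_entry:
  assumes "A \<in> carrier_mat n m" "B \<in> carrier_mat m p" "i < n" "j < p"
  shows "(A * B) $$ (i, j) = (\<Sum>k<m. A $$ (i, k) * B $$ (k, j))"
  using assms by (simp add: index_mult_mat scalar_prod_def atLeast0LessThan)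

lemma mv_entry:
  assumes "A \<in> carrier_mat n m" "v \<in> carrier_vec m" "i < n"
  shows "(A *\<^sub>v v) $ i = (\<Sum>k<m. A $$ (i, k) * v $ k)"
  using assms by (simp add: scalar_prod_def atLeast0LessThan)

lemma ev_bound:
  fixes B :: "real mat"
  assumes B: "B \<in> carrier_mat n n" and nn: "\<forall>i<n. \<forall>j<n. B$$(i,j) \<ge> 0"
    and xpos: "\<forall>i<n. x i > 0"
    and ev: "eigenvalue (map_mat complex_of_real B) la"
  shows "\<exists>i<n. cmod la * x i \<le> (\<Sum>j<n. B$$(i,j) * x j)"
proof -
  obtain v where v: "v \<in> carrier_vec n" "v \<noteq> 0\<^sub>v n" "map_mat complex_of_real B *\<^sub>v v = la \<cdot>\<^sub>v v"
    using ev B unfolding eigenvalue_def eigenvector_def by auto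
  have "\<exists>j<n. v $ j \<noteq> 0"
  proof (rule ccontr)
    assume "\<not> ?thesis"
    hence "v = 0\<^sub>v n" using v(1) by (intro eq_vecI) auto
    with v(2) show False by simp
  qed
  then obtain j0 where j0: "j0 < n" "v $ j0 \<noteq> 0" by auto
  define S where "S = (\<lambda>i. cmod (v$i) / x i) ` {..<n}"
  have finS: "finite S" and neS: "S \<noteq> {}" using j0 unfolding S_def by auto
  define M where "M = Max S"
  obtain i where i: "i < n" "M = cmod (v$i) / x i"
    using Max_in[OF finS neS] unfolding M_def S_def by auto
  have Mge: "cmod (v$j) \<le> M * x j" if "j < n" for j
  proof -
    have "cmod (v$j) / x j \<le> M" unfolding M_def using finS that S_def by auto
    thus ?thesis using xpos that by (simp add: divide_le_eq mult.commute)
  qed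
  have "cmod (v$j0) / x j0 > 0" using j0 xpos by auto
  moreover have "cmod (v$j0) / x j0 \<le> M" unfolding M_def using finS j0 S_def by auto
  ultimately have Mpos: "M > 0" by linarith
  have "(map_mat complex_of_real B *\<^sub>v v) $ i = (la \<cdot>\<^sub>v v) $ i" using v(3) by simp
  hence eq: "la * v $ i = (\<Sum>k<n. complex_of_real (B $$ (i, k)) * v $ k)"
    using mv_entry[of "map_mat complex_of_real B" n n v i] B v(1) i by auto
  have "cmod la * cmod (v$i) = cmod (\<Sum>k<n. complex_of_real (B $$ (i, k)) * v $ k)"
    using eq by (metis norm_mult)
  also have "\<dots> \<le> (\<Sum>k<n. cmod (complex_of_real (B $$ (i, k)) * v $ k))" by (rule norm_sum)
  also have "\<dots> = (\<Sum>k<n. B $$ (i, k) * cmod (v $ k))"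
    using nn i by (intro sum.cong) (auto simp: norm_mult)
  also have "\<dots> \<le> (\<Sum>k<n. B $$ (i, k) * (M * x k))"
    using nn i Mge by (intro sum_mono mult_left_mono) auto
  also have "\<dots> = M * (\<Sum>k<n. B $$ (i, k) * x k)"
    by (simp add: sum_distrib_left algebra_simps)
  finally have f1: "cmod la * cmod (v$i) \<le> M * (\<Sum>k<n. B $$ (i, k) * x k)" .
  have "cmod (v$i) = M * x i" using i xpos by auto
  with f1 have "cmod la * (M * x i) \<le> M * (\<Sum>k<n. B $$ (i, k) * x k)" by simp
  hence "cmod la * x i \<le> (\<Sum>k<n. B $$ (i, k) * x k)" using Mpos
    by (simp add: algebra_simps)
  thus ?thesis using i by auto
qed

lemma rho_attained:
  assumes B: "B \<in> carrier_mat n n" and n: "n > 0"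
  shows "\<exists>la. eigenvalue (map_mat complex_of_real B) la \<and> rho B = cmod la"
  using spectral_radius_mem_max(1)[of "map_mat complex_of_real B" n] B n
  unfolding rho_def spectrum_def by auto

lemma rho_nonneg:
  assumes B: "B \<in> carrier_mat n n" and n: "n > 0"
  shows "rho B \<ge> 0"
  using rho_attained[OF assms] by auto

lemma rho_upper:
  fixes B :: "real mat"
  assumes B: "B \<in> carrier_mat n n" and nn: "\<forall>i<n. \<forall>j<n. B$$(i,j) \<ge> 0"
    and xpos: "\<forall>i<n. x i > 0" and n: "n > 0"
    and le: "\<forall>i<n. (\<Sum>j<n. B$$(i,j) * x j) \<le> s * x i"
  shows "rho B \<le> s"
proof -
  obtain la where la: "eigenvalue (map_mat complex_of_real B) la" "rho B = cmod la"
    using rho_attained[OF B n] by auto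
  obtain i where i: "i < n" "cmod la * x i \<le> (\<Sum>j<n. B$$(i,j) * x j)"
    using ev_bound[OF B nn xpos la(1)] by auto
  have "cmod la * x i \<le> s * x i" using i le by force
  moreover have "x i > 0" using xpos i by auto
  ultimately show ?thesis using la by (simp add: mult_le_cancel_right)
qed

lemma rho_upper_strict:
  fixes B :: "real mat"
  assumes B: "B \<in> carrier_mat n n" and nn: "\<forall>i<n. \<forall>j<n. B$$(i,j) \<ge> 0"
    and xpos: "\<forall>i<n. x i > 0" and n: "n > 0"
    and le: "\<forall>i<n. (\<Sum>j<n. B$$(i,j) * x j) < s * x i"
  shows "rho B < s"
proof -
  obtain la where la: "eigenvalue (map_mat complex_of_real B) la" "rho B = cmod la"
    using rho_attained[OF B n] by auto
  obtain i where i: "i < n" "cmod la * x i \<le> (\<Sum>j<n. B$$(i,j) * x j)"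
    using ev_bound[OF B nn xpos la(1)] by auto
  have "cmod la * x i < s * x i" using i le by force
  moreover have "x i > 0" using xpos i by auto
  ultimately show ?thesis using la by (simp add: mult_less_cancel_right)
qed

lemma pow_nonneg:
  fixes D :: "real mat"
  assumes D: "D \<in> carrier_mat n n" and nn: "\<forall>i<n. \<forall>j<n. D$$(i,j) \<ge> 0"
  shows "\<forall>i<n. \<forall>j<n. (D ^\<^sub>m k) $$ (i,j) \<ge> 0"
proof (induction k)
  case 0
  then show ?case using D by auto
next
  case (Suc k)
  show ?case
  proof (intro allI impI)
    fix i j assume ij: "i < n" "j < n"
    have "(D ^\<^sub>m Suc k) $$ (i,j) = (\<Sum>l<n. (D ^\<^sub>m k) $$ (i, l) * D $$ (l, j))"
      using mult_entry[OF pow_carrier_mat[OF D, of k] D ij] by simp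
    also have "\<dots> \<ge> 0" using Suc nn ij by (intro sum_nonneg) auto
    finally show "(D ^\<^sub>m Suc k) $$ (i,j) \<ge> 0" .
  qed
qed

lemma rho_lower:
  fixes B :: "real mat"
  assumes B: "B \<in> carrier_mat n n" and nn: "\<forall>i<n. \<forall>j<n. B$$(i,j) \<ge> 0"
    and xpos: "\<forall>i<n. x i > 0" and n: "n > 0" and s: "s > 0"
    and ge: "\<forall>i<n. s * x i \<le> (\<Sum>j<n. B$$(i,j) * x j)"
  shows "s \<le> rho B"
proof (rule ccontr)
  assume "\<not> s \<le> rho B"
  hence lt: "rho B < s" by simp
  have r0: "rho B \<ge> 0" by (rule rho_nonneg[OF B n])
  define t where "t = (rho B + s) / 2"
  have t: "t > 0" "rho B < t" "t < s" using lt r0 unfolding t_def by auto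
  define D where "D = (1 / t) \<cdot>\<^sub>m B"
  have D: "D \<in> carrier_mat n n" using B unfolding D_def by auto
  have Dnn: "\<forall>i<n. \<forall>j<n. D$$(i,j) \<ge> 0" using nn B t unfolding D_def by auto
  define C where "C = map_mat complex_of_real D"
  have C: "C \<in> carrier_mat n n" using D unfolding C_def by auto
  have srC: "spectral_radius C < 1"
  proof -
    from spectral_radius_mem_max(1)[OF C n] obtain mu where
      mu: "eigenvalue C mu" "spectral_radius C = cmod mu" unfolding spectrum_def by auto
    then obtain v where v: "v \<in> carrier_vec n" "v \<noteq> 0\<^sub>v n" "C *\<^sub>v v = mu \<cdot>\<^sub>v v"
      using C unfolding eigenvalue_def eigenvector_def by auto
    have "map_mat complex_of_real B *\<^sub>v v = (complex_of_real t * mu) \<cdot>\<^sub>v v"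
    proof (rule eq_vecI)
      fix i assume i: "i < dim_vec ((complex_of_real t * mu) \<cdot>\<^sub>v v)"
      hence i: "i < n" using v by auto
      have "(C *\<^sub>v v) $ i = mu * v $ i" using v(3) i v(1) by (metis index_smult_vec(1) carrier_vecD)
      hence e1: "(\<Sum>k<n. C $$ (i, k) * v $ k) = mu * v $ i" using mv_entry[OF C v(1) i] by simp
      have "(map_mat complex_of_real B *\<^sub>v v) $ i = (\<Sum>k<n. complex_of_real (B $$ (i, k)) * v $ k)"
        using mv_entry[of "map_mat complex_of_real B" n n v i] B v(1) i by auto
      also have "\<dots> = complex_of_real t * (\<Sum>k<n. C $$ (i, k) * v $ k)"
        unfolding sum_distrib_left
        using B i t unfolding C_def D_def by (intro sum.cong) auto
      also have "\<dots> = ((complex_of_real t * mu) \<cdot>\<^sub>v v) $ i" using e1 i v(1) by auto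
      finally show "(map_mat complex_of_real B *\<^sub>v v) $ i = ((complex_of_real t * mu) \<cdot>\<^sub>v v) $ i" .
    qed (use v B in auto)
    hence "eigenvalue (map_mat complex_of_real B) (complex_of_real t * mu)"
      unfolding eigenvalue_def eigenvector_def using v B by auto
    hence "cmod (complex_of_real t * mu) \<le> rho B"
      using spectral_radius_mem_max(2)[of "map_mat complex_of_real B" n] B n
      unfolding rho_def spectrum_def by auto
    hence "t * cmod mu \<le> rho B" using t by (simp add: norm_mult)
    hence tm: "t * cmod mu < t * 1" using t(2) by linarith
    have "cmod mu < 1" using mult_less_cancel_left_pos[OF t(1)] tm by blast
    thus ?thesis using mu by simp
  qed
  obtain c where c: "\<And>k. norm_bound (C ^\<^sub>m k) c"
    using spectral_radius_jnf_norm_bound_less_1_upper_triangular[OF C srC] by auto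
  have pw: "C ^\<^sub>m k = map_mat complex_of_real (D ^\<^sub>m k)" for k
    unfolding C_def by (rule of_real_hom.mat_hom_pow[OF D, symmetric])
  define q where "q = s / t"
  have q: "q > 1" using t unfolding q_def by auto
  have grow: "\<forall>i<n. q ^ k * x i \<le> (\<Sum>j<n. (D ^\<^sub>m k) $$ (i,j) * x j)" for k
  proof (induction k)
    case 0
    show ?case
    proof (intro allI impI)
      fix i assume i: "i < n"
      have "(\<Sum>j<n. (D ^\<^sub>m 0) $$ (i,j) * x j) = (\<Sum>j<n. (if i = j then x j else 0))"
        using D i by (intro sum.cong) auto
      also have "\<dots> = x i" using i by simp
      finally show "q ^ 0 * x i \<le> (\<Sum>j<n. (D ^\<^sub>m 0) $$ (i,j) * x j)" by simp
    qed
  next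
    case (Suc k)
    have Dx: "q * x l \<le> (\<Sum>j<n. D $$ (l,j) * x j)" if l: "l < n" for l
    proof -
      have "(\<Sum>j<n. D $$ (l,j) * x j) = (1/t) * (\<Sum>j<n. B $$ (l,j) * x j)"
        unfolding sum_distrib_left using B l unfolding D_def by (intro sum.cong) auto
      moreover have "s * x l / t \<le> (\<Sum>j<n. B $$ (l,j) * x j) / t"
        using ge l t by (intro divide_right_mono) auto
      ultimately show ?thesis unfolding q_def by simp
    qed
    have nnk: "\<forall>i<n. \<forall>j<n. (D ^\<^sub>m k) $$ (i,j) \<ge> 0" by (rule pow_nonneg[OF D Dnn])
    show ?case
    proof (intro allI impI)
      fix i assume i: "i < n"
      have "(\<Sum>j<n. (D ^\<^sub>m Suc k) $$ (i,j) * x j)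
          = (\<Sum>j<n. (\<Sum>l<n. (D ^\<^sub>m k) $$ (i, l) * D $$ (l, j)) * x j)"
        using mult_entry[OF pow_carrier_mat[OF D, of k] D] i by (intro sum.cong) auto
      also have "\<dots> = (\<Sum>j<n. \<Sum>l<n. (D ^\<^sub>m k) $$ (i, l) * D $$ (l, j) * x j)"
        by (simp add: sum_distrib_right)
      also have "\<dots> = (\<Sum>l<n. \<Sum>j<n. (D ^\<^sub>m k) $$ (i, l) * D $$ (l, j) * x j)"
        by (rule sum.swap)
      also have "\<dots> = (\<Sum>l<n. (D ^\<^sub>m k) $$ (i, l) * (\<Sum>j<n. D $$ (l, j) * x j))"
        by (simp add: sum_distrib_left mult.assoc)
      also have "\<dots> \<ge> (\<Sum>l<n. (D ^\<^sub>m k) $$ (i, l) * (q * x l))"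
        using nnk i Dx by (intro sum_mono mult_left_mono) auto
      finally have "(\<Sum>l<n. (D ^\<^sub>m k) $$ (i, l) * (q * x l)) \<le> (\<Sum>j<n. (D ^\<^sub>m Suc k) $$ (i,j) * x j)" .
      moreover have "(\<Sum>l<n. (D ^\<^sub>m k) $$ (i, l) * (q * x l)) = q * (\<Sum>l<n. (D ^\<^sub>m k) $$ (i, l) * x l)"
        by (simp add: sum_distrib_left algebra_simps)
      moreover have "q * (q ^ k * x i) \<le> q * (\<Sum>l<n. (D ^\<^sub>m k) $$ (i, l) * x l)"
        using Suc i q by (intro mult_left_mono) auto
      ultimately show "q ^ Suc k * x i \<le> (\<Sum>j<n. (D ^\<^sub>m Suc k) $$ (i,j) * x j)"
        by (simp add: mult.assoc)
    qed
  qed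
  have bnd: "(\<Sum>j<n. (D ^\<^sub>m k) $$ (0,j) * x j) \<le> c * (\<Sum>j<n. x j)" for k
  proof -
    have "(\<Sum>j<n. (D ^\<^sub>m k) $$ (0,j) * x j) \<le> (\<Sum>j<n. c * x j)"
    proof (intro sum_mono)
      fix j assume j: "j \<in> {..<n}"
      have "norm ((C ^\<^sub>m k) $$ (0, j)) \<le> c" using c[of k] j n C
        unfolding norm_bound_def by auto
      hence "\<bar>(D ^\<^sub>m k) $$ (0,j)\<bar> \<le> c" using j n D unfolding pw by auto
      hence "(D ^\<^sub>m k) $$ (0,j) \<le> c" by simp
      thus "(D ^\<^sub>m k) $$ (0,j) * x j \<le> c * x j" using xpos j by (intro mult_right_mono) auto
    qed
    thus ?thesis by (simp add: sum_distrib_left)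
  qed
  have x0: "x 0 > 0" using xpos n by auto
  obtain k where k: "c * (\<Sum>j<n. x j) / x 0 < q ^ k" using real_arch_pow[OF q] by auto
  have "c * (\<Sum>j<n. x j) < q ^ k * x 0" using k x0 by (simp add: divide_less_eq)
  moreover have "q ^ k * x 0 \<le> c * (\<Sum>j<n. x j)" using grow[of k] n bnd[of k] by force
  ultimately show False by simp
qed

lemma sort_perm:
  fixes f :: "nat \<Rightarrow> real"
  shows "\<exists>\<sigma>. \<sigma> permutes {..<n} \<and> (\<forall>i j. i \<le> j \<longrightarrow> j < n \<longrightarrow> f (\<sigma> i) \<le> f (\<sigma> j))"
proof -
  define ys where "ys = sort_key f [0..<n]"
  have len: "length ys = n" and dis: "distinct ys" and st: "set ys = {..<n}"
    unfolding ys_def by auto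
  have so: "sorted (map f ys)" unfolding ys_def by (rule sorted_sort_key)
  define \<sigma> where "\<sigma> = (\<lambda>i. if i < n then ys ! i else i)"
  have "bij_betw ((!) ys) {..<n} {..<n}" using bij_betw_nth[OF dis] len st by auto
  hence "bij_betw \<sigma> {..<n} {..<n}" unfolding \<sigma>_def
    by (rule bij_betw_cong[THEN iffD1, rotated]) auto
  hence perm: "\<sigma> permutes {..<n}" by (rule bij_imp_permutes) (auto simp: \<sigma>_def)
  have "f (\<sigma> i) \<le> f (\<sigma> j)" if "i \<le> j" "j < n" for i j
  proof -
    have "map f ys ! i \<le> map f ys ! j" using sorted_nth_mono[OF so that(1)] that len by auto
    thus ?thesis using that len unfolding \<sigma>_def by auto
  qed
  thus ?thesis using perm by blast
qed


lemma cheb_identity: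
  fixes b r :: "nat \<Rightarrow> real"
  shows "(\<Sum>j<n. \<Sum>k<n. (b j - b k) * (r j - r k))
     = 2 * (real n * (\<Sum>j<n. b j * r j) - (\<Sum>j<n. b j) * (\<Sum>j<n. r j))"
proof -
  have e: "(b j - b k) * (r j - r k) = b j * r j + b k * r k - b j * r k - b k * r j" for j k
    by (simp add: algebra_simps)
  have "(\<Sum>j<n. \<Sum>k<n. (b j - b k) * (r j - r k))
     = (\<Sum>j<n. \<Sum>k<n. b j * r j) + (\<Sum>j<n. \<Sum>k<n. b k * r k)
       - (\<Sum>j<n. \<Sum>k<n. b j * r k) - (\<Sum>j<n. \<Sum>k<n. b k * r j)"
    unfolding e by (simp add: sum.distrib sum_subtractf)
  also have "(\<Sum>j<n. \<Sum>k<n. b j * r j) = real n * (\<Sum>j<n. b j * r j)"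
    by (simp add: sum_distrib_left)
  also have "(\<Sum>j<n. \<Sum>k<n. b k * r k) = real n * (\<Sum>j<n. b j * r j)"
    by simp
  also have "(\<Sum>j<n. \<Sum>k<n. b j * r k) = (\<Sum>j<n. b j) * (\<Sum>j<n. r j)"
    by (simp add: sum_product)
  also have "(\<Sum>j<n. \<Sum>k<n. b k * r j) = (\<Sum>j<n. b j) * (\<Sum>j<n. r j)"
  proof -
    have "(\<Sum>j<n. \<Sum>k<n. b k * r j) = (\<Sum>j<n. \<Sum>k<n. r j * b k)" by (simp add: mult.commute)
    also have "\<dots> = (\<Sum>j<n. r j) * (\<Sum>j<n. b j)" by (simp add: sum_product)
    finally show ?thesis by simp
  qed
  finally show ?thesis by simp
qed


lemma ordered_B:
  fixes f :: "nat \<Rightarrow> real" and A :: "real mat"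
  assumes A: "A \<in> carrier_mat n n"
  shows "\<exists>B\<in>Omega n A. \<forall>i<n. \<forall>j<n. \<forall>k<n. f j < f k \<longrightarrow> B $$ (i,j) \<le> B $$ (i,k)"
proof -
  obtain \<sigma> where \<sigma>: "\<sigma> permutes {..<n}" "\<And>i j. i \<le> j \<Longrightarrow> j < n \<Longrightarrow> f (\<sigma> i) \<le> f (\<sigma> j)"
    using sort_perm[of n f] by auto
  have "\<forall>i. \<exists>\<tau>. \<tau> permutes {..<n} \<and> (\<forall>p q. p \<le> q \<longrightarrow> q < n \<longrightarrow> A $$ (i, \<tau> p) \<le> A $$ (i, \<tau> q))"
  proof
    fix i show "\<exists>\<tau>. \<tau> permutes {..<n} \<and> (\<forall>p q. p \<le> q \<longrightarrow> q < n \<longrightarrow> A $$ (i, \<tau> p) \<le> A $$ (i, \<tau> q))"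
      using sort_perm[of n "\<lambda>j. A $$ (i, j)"] by simp
  qed
  from choice[OF this] obtain \<tau> where \<tau>0: "\<forall>i. \<tau> i permutes {..<n} \<and> (\<forall>p q. p \<le> q \<longrightarrow> q < n \<longrightarrow> A $$ (i, \<tau> i p) \<le> A $$ (i, \<tau> i q))"
    by blast
  have \<tau>: "\<And>i. \<tau> i permutes {..<n}"
    "\<And>i p q. p \<le> q \<Longrightarrow> q < n \<Longrightarrow> A $$ (i, \<tau> i p) \<le> A $$ (i, \<tau> i q)"
    using \<tau>0 by blast+
  define B where "B = mat n n (\<lambda>(i,j). A $$ (i, \<tau> i (inv_into UNIV \<sigma> j)))"
  have "B \<in> Omega n A"
    unfolding Omega_def
  proof (intro CollectI conjI allI impI)
    show "B \<in> carrier_mat n n" unfolding B_def by auto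
    fix i assume i: "i < n"
    show "\<exists>\<phi>. \<phi> permutes {..<n} \<and> (\<forall>j<n. B $$ (i, j) = A $$ (i, \<phi> j))"
    proof (rule exI[of _ "\<tau> i \<circ> inv_into UNIV \<sigma>"], intro conjI allI impI)
      show "\<tau> i \<circ> inv_into UNIV \<sigma> permutes {..<n}" by (rule permutes_compose[OF permutes_inv[OF \<sigma>(1)] \<tau>(1)])
      fix j assume "j < n"
      thus "B $$ (i, j) = A $$ (i, (\<tau> i \<circ> inv_into UNIV \<sigma>) j)" using i unfolding B_def by simp
    qed
  qed
  moreover have "B $$ (i,j) \<le> B $$ (i,k)" if "i < n" "j < n" "k < n" "f j < f k" for i j k
  proof -
    define p where "p = inv_into UNIV \<sigma> j"
    define q where "q = inv_into UNIV \<sigma> k"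
    have pq: "p < n" "q < n" unfolding p_def q_def
      using permutes_in_image[OF permutes_inv[OF \<sigma>(1)]] that by auto
    have "\<sigma> p = j" "\<sigma> q = k" unfolding p_def q_def using permutes_inverses(1)[OF \<sigma>(1)] by simp_all
    hence "p < q" using \<sigma>(2)[of q p] pq that(4) by (metis not_le less_imp_le)
    hence "A $$ (i, \<tau> i p) \<le> A $$ (i, \<tau> i q)" using \<tau>(2)[of p q i] pq by simp
    thus ?thesis using that unfolding B_def p_def q_def by simp
  qed
  ultimately show ?thesis by blast
qed


lemma Omega_carrier: "B \<in> Omega n A \<Longrightarrow> B \<in> carrier_mat n n"
  unfolding Omega_def by auto


lemma Omega_perm: "B \<in> Omega n A \<Longrightarrow> i < n \<Longrightarrow> \<exists>\<phi>. \<phi> permutes {..<n} \<and> (\<forall>j<n. B $$ (i, j) = A $$ (i, \<phi> j))"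
  unfolding Omega_def by auto


lemma Omega_pos:
  assumes "B \<in> Omega n A" "\<forall>i<n. \<forall>j<n. A $$ (i, j) > 0"
  shows "\<forall>i<n. \<forall>j<n. B $$ (i, j) > 0"
proof (intro allI impI)
  fix i j assume ij: "i < n" "j < n"
  obtain \<phi> where \<phi>: "\<phi> permutes {..<n}" "\<forall>j<n. B $$ (i, j) = A $$ (i, \<phi> j)"
    using Omega_perm[OF assms(1) ij(1)] by auto
  have "\<phi> j < n" using permutes_in_image[OF \<phi>(1)] ij by simp
  thus "B $$ (i, j) > 0" using \<phi>(2) ij assms(2) by simp
qed


lemma Omega_rowsum:
  assumes "B \<in> Omega n A" "i < n"
  shows "(\<Sum>j<n. B $$ (i, j)) = (\<Sum>j<n. A $$ (i, j))"
proof -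
  obtain \<phi> where \<phi>: "\<phi> permutes {..<n}" "\<forall>j<n. B $$ (i, j) = A $$ (i, \<phi> j)"
    using Omega_perm[OF assms] by auto
  have "(\<Sum>j<n. B $$ (i, j)) = (\<Sum>j<n. ((\<lambda>j. A $$ (i, j)) \<circ> \<phi>) j)"
    using \<phi>(2) by (intro sum.cong) auto
  also have "\<dots> = (\<Sum>j<n. A $$ (i, j))" using sum.permute[OF \<phi>(1), symmetric] by simp
  finally show ?thesis .
qed


lemma Omega_surj:
  assumes "B \<in> Omega n A" "i < n" "m < n"
  shows "\<exists>j<n. B $$ (i, j) = A $$ (i, m)"
proof -
  obtain \<phi> where \<phi>: "\<phi> permutes {..<n}" "\<forall>j<n. B $$ (i, j) = A $$ (i, \<phi> j)"
    using Omega_perm[OF assms(1,2)] by auto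
  have "m \<in> \<phi> ` {..<n}" using permutes_image[OF \<phi>(1)] assms(3) by simp
  then obtain j where "j < n" "\<phi> j = m" by auto
  thus ?thesis using \<phi>(2) by auto
qed


lemma A_in_Omega: "A \<in> carrier_mat n n \<Longrightarrow> A \<in> Omega n A"
  unfolding Omega_def by (auto intro!: exI[of _ id])


lemma Omega_const:
  assumes "B \<in> Omega n A" "\<forall>i<n. \<forall>j<n. A $$ (i, j) = A $$ (i, 0)" "n > 0"
  shows "\<forall>i<n. \<forall>j<n. B $$ (i, j) = B $$ (i, 0)"
proof (intro allI impI)
  fix i j assume ij: "i < n" "j < n"
  obtain \<phi> where \<phi>: "\<phi> permutes {..<n}" "\<forall>j<n. B $$ (i, j) = A $$ (i, \<phi> j)"
    using Omega_perm[OF assms(1) ij(1)] by auto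
  have "\<phi> j < n" "\<phi> 0 < n" using permutes_in_image[OF \<phi>(1)] ij assms(3) by simp_all
  hence "A $$ (i, \<phi> j) = A $$ (i, 0)" "A $$ (i, \<phi> 0) = A $$ (i, 0)" using assms(2) ij by blast+
  moreover have "B $$ (i, j) = A $$ (i, \<phi> j)" "B $$ (i, 0) = A $$ (i, \<phi> 0)" using \<phi>(2) ij assms(3) by blast+
  ultimately show "B $$ (i, j) = B $$ (i, 0)" by simp
qed


lemma rho_rowsum_eq:
  fixes B :: "real mat"
  assumes B: "B \<in> carrier_mat n n" and pos: "\<forall>i<n. \<forall>j<n. B $$ (i, j) > 0" and n: "n > 0"
    and rs: "\<forall>i<n. (\<Sum>j<n. B $$ (i, j)) = r"
  shows "rho B = r"
proof -
  have nn: "\<forall>i<n. \<forall>j<n. B $$ (i, j) \<ge> 0" using pos by (simp add: less_imp_le)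
  have x: "\<forall>i<n. (\<lambda>_. 1::real) i > 0" by simp
  have r: "r > 0"
  proof -
    have "(\<Sum>j<n. B $$ (0, j)) > 0" using pos n by (intro sum_pos) auto
    thus ?thesis using rs n by auto
  qed
  have "rho B \<le> r" by (rule rho_upper[OF B nn x n]) (use rs in simp)
  moreover have "r \<le> rho B" by (rule rho_lower[OF B nn x n r]) (use rs in simp)
  ultimately show ?thesis by simp
qed


lemma finite_Omega: "finite (Omega n A)"
proof -
  define I where "I = {..<n} \<times> {..<n}"
  define S where "S = (\<lambda>ij. A $$ ij) ` I"
  have "Omega n A \<subseteq> (\<lambda>f. mat n n f) ` (PiE I (\<lambda>_. S))"
  proof
    fix B assume B: "B \<in> Omega n A"
    have Bc: "B \<in> carrier_mat n n" using Omega_carrier[OF B] .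
    define f where "f = (\<lambda>ij. if ij \<in> I then B $$ ij else undefined)"
    have "f \<in> PiE I (\<lambda>_. S)"
    proof (rule PiE_I)
      fix ij assume ij: "ij \<in> I"
      then obtain i j where ij': "ij = (i, j)" "i < n" "j < n" unfolding I_def by auto
      obtain \<phi> where \<phi>: "\<phi> permutes {..<n}" "\<forall>j<n. B $$ (i, j) = A $$ (i, \<phi> j)"
        using Omega_perm[OF B ij'(2)] by auto
      have m: "\<phi> j < n" "B $$ (i, j) = A $$ (i, \<phi> j)"
        using permutes_in_image[OF \<phi>(1)] \<phi>(2) ij' by simp_all
      show "f ij \<in> S" unfolding f_def S_def I_def using ij ij' m by auto
    qed (auto simp: f_def)
    moreover have "B = mat n n f"
      using Bc by (intro eq_matI) (auto simp: f_def I_def)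
    ultimately show "B \<in> (\<lambda>f. mat n n f) ` (PiE I (\<lambda>_. S))" by blast
  qed
  moreover have "finite (PiE I (\<lambda>_. S))" unfolding S_def I_def by (intro finite_PiE) auto
  ultimately show ?thesis by (meson finite_imageI finite_subset)
qed


lemma rho_const_rows:
  fixes B :: "real mat"
  assumes B: "B \<in> carrier_mat n n" and pos: "\<forall>i<n. \<forall>j<n. B $$ (i, j) > 0" and n: "n > 0"
    and c: "\<forall>i<n. \<forall>j<n. B $$ (i, j) = B $$ (i, 0)"
  shows "rho B = (\<Sum>i<n. B $$ (i, 0))"
proof -
  define x where "x = (\<lambda>i. B $$ (i, 0))"
  define s where "s = (\<Sum>i<n. x i)"
  have nn: "\<forall>i<n. \<forall>j<n. B $$ (i, j) \<ge> 0" using pos by (simp add: less_imp_le)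
  have xp: "\<forall>i<n. x i > 0" using pos n unfolding x_def by auto
  have s: "s > 0" unfolding s_def using xp n by (intro sum_pos) auto
  have eq: "\<forall>i<n. (\<Sum>j<n. B $$ (i, j) * x j) = s * x i"
  proof (intro allI impI)
    fix i assume i: "i < n"
    have "(\<Sum>j<n. B $$ (i, j) * x j) = (\<Sum>j<n. x i * x j)"
    proof (rule sum.cong)
      fix j assume "j \<in> {..<n}"
      hence "B $$ (i, j) = B $$ (i, 0)" using c i by blast
      thus "B $$ (i, j) * x j = x i * x j" unfolding x_def by simp
    qed simp
    also have "\<dots> = s * x i" unfolding s_def by (simp add: sum_distrib_left mult.commute)
    finally show "(\<Sum>j<n. B $$ (i, j) * x j) = s * x i" .
  qed
  have "rho B \<le> s" by (rule rho_upper[OF B nn xp n]) (use eq in simp)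
  moreover have "s \<le> rho B" by (rule rho_lower[OF B nn xp n s]) (use eq in simp)
  ultimately show ?thesis unfolding s_def x_def by simp
qed




lemma nonconst_pair:
  fixes b r :: "nat \<Rightarrow> real"
  assumes "j0 < n" "k0 < n" "r j0 \<noteq> r k0" "p < n" "q < n" "b p \<noteq> b q"
  shows "\<exists>j<n. \<exists>k<n. r j \<noteq> r k \<and> b j \<noteq> b k"
proof (rule ccontr)
  assume "\<not> ?thesis"
  hence H: "\<And>j k. j < n \<Longrightarrow> k < n \<Longrightarrow> r j \<noteq> r k \<Longrightarrow> b j = b k" by blast
  have all: "b m = b j0" if "m < n" for m
  proof (cases "r m = r j0")
    case True
    hence "r m \<noteq> r k0" using assms(3) by simp
    hence "b m = b k0" using H that assms(2) by blast
    moreover have "b j0 = b k0" using H assms(1-3) by blast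
    ultimately show ?thesis by simp
  next
    case False
    thus ?thesis using H that assms(1) by blast
  qed
  have "b p = b q" using all[OF assms(4)] all[OF assms(5)] by simp
  with assms(6) show False by simp
qed

lemma rho_gt:
  fixes B :: "real mat"
  assumes B: "B \<in> carrier_mat n n" and nn: "\<forall>i<n. \<forall>j<n. B$$(i,j) \<ge> 0"
    and xpos: "\<forall>i<n. x i > 0" and n: "n > 0" and s: "s \<ge> 0"
    and gt: "\<forall>i<n. s * x i < (\<Sum>j<n. B$$(i,j) * x j)"
  shows "s < rho B"
proof -
  define S where "S = (\<lambda>i. (\<Sum>j<n. B$$(i,j) * x j) / x i) ` {..<n}"
  have finS: "finite S" and neS: "S \<noteq> {}" using n unfolding S_def by auto
  define s' where "s' = Min S"
  have "s < s'" unfolding s'_def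
  proof (subst Min_gr_iff[OF finS neS], intro ballI)
    fix a assume "a \<in> S"
    then obtain i where i: "i < n" "a = (\<Sum>j<n. B$$(i,j) * x j) / x i" unfolding S_def by auto
    thus "s < a" using gt xpos by (simp add: less_divide_eq)
  qed
  moreover have "s' \<le> rho B"
  proof (rule rho_lower[OF B nn xpos n])
    show "s' > 0" using \<open>s < s'\<close> s by simp
    show "\<forall>i<n. s' * x i \<le> (\<Sum>j<n. B $$ (i, j) * x j)"
    proof (intro allI impI)
      fix i assume i: "i < n"
      have "s' \<le> (\<Sum>j<n. B$$(i,j) * x j) / x i" unfolding s'_def S_def
        using finS i S_def by (intro Min_le) auto
      thus "s' * x i \<le> (\<Sum>j<n. B $$ (i, j) * x j)" using xpos i by (simp add: le_divide_eq)
    qed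
  qed
  ultimately show ?thesis by simp
qed

lemma key_step:
  fixes B :: "real mat" and e :: real and r :: "nat \<Rightarrow> real"
  assumes B: "B \<in> carrier_mat n n" and pos: "\<forall>i<n. \<forall>j<n. B$$(i,j) > 0" and n: "n > 0"
    and rdef: "\<forall>i<n. r i = (\<Sum>j<n. B$$(i,j))"
    and sgn: "\<forall>i<n. \<forall>j<n. \<forall>k<n. 0 \<le> e * ((B$$(i,j) - B$$(i,k)) * (r j - r k))"
    and st: "i0 < n" "j1 < n" "k1 < n" "r j1 \<noteq> r k1" "B$$(i0,j1) \<noteq> B$$(i0,k1)"
    and e: "e = 1 \<or> e = -1"
  shows "\<forall>i<n. 0 < e * ((\<Sum>j<n. B$$(i,j) * (\<Sum>l<n. B$$(j,l) * r l))
                 - ((\<Sum>l<n. r l) / real n) * (\<Sum>l<n. B$$(i,l) * r l))"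
proof -
  define T where "T = (\<Sum>l<n. r l)"
  define avg where "avg = T / real n"
  define u where "u = (\<lambda>i. \<Sum>l<n. B$$(i,l) * r l)"
  have cheb: "(\<Sum>j<n. \<Sum>k<n. (B$$(i,j) - B$$(i,k)) * (r j - r k)) = 2 * (real n * u i - r i * T)"
    if i: "i < n" for i
    using cheb_identity[of "\<lambda>j. B$$(i,j)" r n] rdef i unfolding u_def T_def by simp
  have ge: "0 \<le> e * (u i - avg * r i)" if i: "i < n" for i
  proof -
    have "0 \<le> (\<Sum>j<n. \<Sum>k<n. e * ((B$$(i,j) - B$$(i,k)) * (r j - r k)))"
      using sgn i by (intro sum_nonneg) auto
    also have "\<dots> = e * 2 * (real n * u i - r i * T)"
      using cheb[OF i] by (simp add: sum_distrib_left[symmetric] mult.assoc)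
    finally have "0 \<le> e * (real n * u i - r i * T)" by simp
    hence "0 \<le> e * (real n * u i - r i * T) / real n" using n by simp
    also have "e * (real n * u i - r i * T) / real n = e * (u i - avg * r i)"
      unfolding avg_def using n by (simp add: field_simps)
    finally show ?thesis .
  qed
  have gt0: "0 < e * (u i0 - avg * r i0)"
  proof -
    have t: "0 < e * ((B$$(i0,j1) - B$$(i0,k1)) * (r j1 - r k1))"
    proof -
      have "(B$$(i0,j1) - B$$(i0,k1)) * (r j1 - r k1) \<noteq> 0" using st by simp
      hence "e * ((B$$(i0,j1) - B$$(i0,k1)) * (r j1 - r k1)) \<noteq> 0" using e by auto
      moreover have "0 \<le> e * ((B$$(i0,j1) - B$$(i0,k1)) * (r j1 - r k1))" using sgn st by blast
      ultimately show ?thesis by linarith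
    qed
    have inner: "0 < (\<Sum>k<n. e * ((B$$(i0,j1) - B$$(i0,k)) * (r j1 - r k)))"
      using sgn st t by (intro sum_pos2[of _ k1]) auto
    have "0 < (\<Sum>j<n. \<Sum>k<n. e * ((B$$(i0,j) - B$$(i0,k)) * (r j - r k)))"
    proof (rule sum_pos2[of "{..<n}" j1])
      show "0 < (\<Sum>k<n. e * ((B$$(i0,j1) - B$$(i0,k)) * (r j1 - r k)))" by (rule inner)
      show "\<And>j. j \<in> {..<n} \<Longrightarrow> 0 \<le> (\<Sum>k<n. e * ((B$$(i0,j) - B$$(i0,k)) * (r j - r k)))"
        using sgn st by (intro sum_nonneg) auto
    qed (use st in auto)
    also have "\<dots> = e * 2 * (real n * u i0 - r i0 * T)"
      using cheb[OF st(1)] by (simp add: sum_distrib_left[symmetric] mult.assoc)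
    finally have "0 < e * (real n * u i0 - r i0 * T)" by simp
    hence "0 < e * (real n * u i0 - r i0 * T) / real n" using n by simp
    also have "e * (real n * u i0 - r i0 * T) / real n = e * (u i0 - avg * r i0)"
      unfolding avg_def using n by (simp add: field_simps)
    finally show ?thesis .
  qed
  show ?thesis
  proof (intro allI impI)
    fix i assume i: "i < n"
    have "e * ((\<Sum>j<n. B$$(i,j) * u j) - avg * u i) = (\<Sum>j<n. B$$(i,j) * (e * (u j - avg * r j)))"
      unfolding u_def by (simp add: sum_distrib_left sum_subtractf algebra_simps)
    also have "\<dots> > 0"
    proof (rule sum_pos2[of _ i0])
      show "0 < B $$ (i, i0) * (e * (u i0 - avg * r i0))" using pos i st gt0 by simp
      show "\<And>j. j \<in> {..<n} \<Longrightarrow> 0 \<le> B $$ (i, j) * (e * (u j - avg * r j))"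
        using pos i ge by (simp add: less_imp_le)
    qed (use st in auto)
    finally show "0 < e * ((\<Sum>j<n. B$$(i,j) * (\<Sum>l<n. B$$(j,l) * r l))
                 - ((\<Sum>l<n. r l) / real n) * (\<Sum>l<n. B$$(i,l) * r l))"
      unfolding u_def avg_def T_def .
  qed
qed



lemma strict_exists:
  fixes A :: "real mat"
  assumes A: "A \<in> carrier_mat n n" and pos: "\<forall>i<n. \<forall>j<n. A$$(i,j) > 0" and n: "n > 0"
    and nr: "\<not> (\<forall>i<n. \<forall>j<n. (\<Sum>k<n. A$$(i,k)) = (\<Sum>k<n. A$$(j,k)))"
    and nc: "\<not> (\<forall>i<n. \<forall>j<n. A$$(i,j) = A$$(i,0))"
    and e: "e = 1 \<or> e = (-1::real)"
  shows "\<exists>B\<in>Omega n A. 0 < e * (rho B - (\<Sum>i<n. \<Sum>j<n. A $$ (i, j)) / real n)"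
proof -
  define r where "r = (\<lambda>i. \<Sum>k<n. A$$(i,k))"
  obtain B where B: "B \<in> Omega n A" and ord: "\<forall>i<n. \<forall>j<n. \<forall>k<n. e * r j < e * r k \<longrightarrow> B $$ (i,j) \<le> B $$ (i,k)"
    using ordered_B[OF A, of "\<lambda>j. e * r j"] by auto
  have Bc: "B \<in> carrier_mat n n" using Omega_carrier[OF B] .
  have Bpos: "\<forall>i<n. \<forall>j<n. B$$(i,j) > 0" using Omega_pos[OF B pos] .
  have Bnn: "\<forall>i<n. \<forall>j<n. B$$(i,j) \<ge> 0" using Bpos by (simp add: less_imp_le)
  have rB: "\<forall>i<n. r i = (\<Sum>j<n. B$$(i,j))" using Omega_rowsum[OF B] unfolding r_def by simp
  have sgn: "\<forall>i<n. \<forall>j<n. \<forall>k<n. 0 \<le> e * ((B$$(i,j) - B$$(i,k)) * (r j - r k))"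
  proof (intro allI impI)
    fix i j k assume ijk: "i < n" "j < n" "k < n"
    consider "e * r j < e * r k" | "e * r k < e * r j" | "e * r j = e * r k" by linarith
    thus "0 \<le> e * ((B$$(i,j) - B$$(i,k)) * (r j - r k))"
    proof cases
      case 1
      hence "B $$ (i,j) \<le> B $$ (i,k)" using ord ijk by blast
      moreover have "e * (r j - r k) < 0" using 1 by (simp add: algebra_simps)
      ultimately have "0 \<le> (B$$(i,j) - B$$(i,k)) * (e * (r j - r k))"
        by (simp add: mult_nonpos_nonpos)
      thus ?thesis by (simp add: algebra_simps)
    next
      case 2
      hence "B $$ (i,k) \<le> B $$ (i,j)" using ord ijk by blast
      moreover have "e * (r j - r k) > 0" using 2 by (simp add: algebra_simps)
      ultimately have "0 \<le> (B$$(i,j) - B$$(i,k)) * (e * (r j - r k))"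
        by simp
      thus ?thesis by (simp add: algebra_simps)
    next
      case 3
      hence z: "e * (r j - r k) = 0" by (simp add: algebra_simps)
      have "e * ((B$$(i,j) - B$$(i,k)) * (r j - r k)) = (B$$(i,j) - B$$(i,k)) * (e * (r j - r k))"
        by (simp add: algebra_simps)
      thus ?thesis using z by (simp only: mult_zero_right order_refl)
    qed
  qed
  obtain j0 k0 where jk0: "j0 < n" "k0 < n" "r j0 \<noteq> r k0" using nr unfolding r_def by auto
  obtain i0 p where ip: "i0 < n" "p < n" "A$$(i0,p) \<noteq> A$$(i0,0)" using nc by auto
  obtain p' where p': "p' < n" "B$$(i0,p') = A$$(i0,p)" using Omega_surj[OF B ip(1,2)] by auto
  obtain q' where q': "q' < n" "B$$(i0,q') = A$$(i0,0)" using Omega_surj[OF B ip(1) n] by auto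
  obtain j1 k1 where jk1: "j1 < n" "k1 < n" "r j1 \<noteq> r k1" "B$$(i0,j1) \<noteq> B$$(i0,k1)"
    using nonconst_pair[of j0 n k0 r p' q' "\<lambda>j. B$$(i0,j)"] jk0 p' q' ip by auto
  have key: "\<forall>i<n. 0 < e * ((\<Sum>j<n. B$$(i,j) * (\<Sum>l<n. B$$(j,l) * r l))
                 - ((\<Sum>l<n. r l) / real n) * (\<Sum>l<n. B$$(i,l) * r l))"
    by (rule key_step[OF Bc Bpos n rB sgn ip(1) jk1 e])
  define y where "y = (\<lambda>i. \<Sum>l<n. B$$(i,l) * r l)"
  define avg where "avg = (\<Sum>l<n. r l) / real n"
  have avg_eq: "(\<Sum>i<n. \<Sum>j<n. A $$ (i, j)) / real n = avg" unfolding avg_def r_def by simp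
  have rpos: "\<forall>i<n. r i > 0" unfolding r_def using pos by (auto intro!: sum_pos)
  have ypos: "\<forall>i<n. y i > 0" unfolding y_def using Bpos rpos n by (auto intro!: sum_pos)
  have "(\<Sum>l<n. r l) \<ge> 0" using rpos by (intro sum_nonneg) (simp add: less_imp_le)
  hence avg0: "avg \<ge> 0" unfolding avg_def by simp
  have "0 < e * (rho B - avg)"
    using e
  proof
    assume e1: "e = 1"
    have "avg < rho B"
    proof (rule rho_gt[OF Bc Bnn ypos n avg0])
      show "\<forall>i<n. avg * y i < (\<Sum>j<n. B $$ (i, j) * y j)"
        using key unfolding e1 y_def avg_def by simp
    qed
    thus ?thesis using e1 by simp
  next
    assume e1: "e = -1"
    have "rho B < avg"
    proof (rule rho_upper_strict[OF Bc Bnn ypos n])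
      show "\<forall>i<n. (\<Sum>j<n. B $$ (i, j) * y j) < avg * y i"
        using key unfolding e1 y_def avg_def by simp
    qed
    thus ?thesis using e1 by simp
  qed
  thus ?thesis using B avg_eq by auto
qed



lemma P_rho:
  fixes A :: "real mat"
  assumes A: "A \<in> carrier_mat n n" and pos: "\<forall>i<n. \<forall>j<n. A$$(i,j) > 0" and n: "n > 0"
    and P: "(\<forall>i<n. \<forall>j<n. (\<Sum>k<n. A$$(i,k)) = (\<Sum>k<n. A$$(j,k))) \<or> (\<forall>i<n. \<forall>j<n. A$$(i,j) = A$$(i,0))"
    and B: "B \<in> Omega n A"
  shows "rho B = (\<Sum>i<n. \<Sum>j<n. A $$ (i, j)) / real n"
proof -
  have Bc: "B \<in> carrier_mat n n" using Omega_carrier[OF B] .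
  have Bpos: "\<forall>i<n. \<forall>j<n. B$$(i,j) > 0" using Omega_pos[OF B pos] .
  have rs: "\<forall>i<n. (\<Sum>j<n. B$$(i,j)) = (\<Sum>j<n. A$$(i,j))" using Omega_rowsum[OF B] by simp
  from P show ?thesis
  proof
    assume eq: "\<forall>i<n. \<forall>j<n. (\<Sum>k<n. A$$(i,k)) = (\<Sum>k<n. A$$(j,k))"
    define r where "r = (\<Sum>k<n. A$$(0,k))"
    have ri: "\<forall>i<n. (\<Sum>j<n. A$$(i,j)) = r" using eq n unfolding r_def by blast
    have "rho B = r" by (rule rho_rowsum_eq[OF Bc Bpos n]) (use rs ri in simp)
    moreover have "(\<Sum>i<n. \<Sum>j<n. A $$ (i, j)) = real n * r"
      using ri by simp
    ultimately show ?thesis using n by simp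
  next
    assume c: "\<forall>i<n. \<forall>j<n. A$$(i,j) = A$$(i,0)"
    have cB: "\<forall>i<n. \<forall>j<n. B$$(i,j) = B$$(i,0)" by (rule Omega_const[OF B c n])
    have "rho B = (\<Sum>i<n. B$$(i,0))" by (rule rho_const_rows[OF Bc Bpos n cB])
    moreover have "(\<Sum>i<n. \<Sum>j<n. A $$ (i, j)) = real n * (\<Sum>i<n. B$$(i,0))"
    proof -
      have "(\<Sum>i<n. \<Sum>j<n. A $$ (i, j)) = (\<Sum>i<n. \<Sum>j<n. B $$ (i, j))" using rs by simp
      also have "\<dots> = (\<Sum>i<n. real n * B$$(i,0))"
      proof (rule sum.cong)
        fix i assume i: "i \<in> {..<n}"
        have "(\<Sum>j<n. B $$ (i, j)) = (\<Sum>j<n. B $$ (i, 0))"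
        proof (rule sum.cong)
          fix j assume "j \<in> {..<n}"
          thus "B $$ (i, j) = B $$ (i, 0)" using cB i by blast
        qed simp
        thus "(\<Sum>j<n. B $$ (i, j)) = real n * B$$(i,0)" by simp
      qed simp
      finally show ?thesis by (simp add: sum_distrib_left)
    qed
    ultimately show ?thesis using n by simp
  qed
qed

lemma II_iff_P:
  fixes A :: "real mat"
  assumes A: "A \<in> carrier_mat n n" and pos: "\<forall>i<n. \<forall>j<n. A$$(i,j) > 0" and n: "n > 0"
  shows "(A *\<^sub>v vec n (\<lambda>_. 1) = rho A \<cdot>\<^sub>v vec n (\<lambda>_. 1)
                \<or> (\<exists>D \<in> carrier_mat n n. diagonal_mat D \<and> (\<forall>i<n. D $$ (i, i) \<ge> 0) \<and> det D \<noteq> 0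
                      \<and> D * A = mat n n (\<lambda>_. 1)))
     \<longleftrightarrow> ((\<forall>i<n. \<forall>j<n. (\<Sum>k<n. A$$(i,k)) = (\<Sum>k<n. A$$(j,k))) \<or> (\<forall>i<n. \<forall>j<n. A$$(i,j) = A$$(i,0)))"
    (is "?II \<longleftrightarrow> ?P")
proof
  have mv1: "(A *\<^sub>v vec n (\<lambda>_. 1)) $ i = (\<Sum>k<n. A$$(i,k))" if "i < n" for i
    using mv_entry[OF A _ that, of "vec n (\<lambda>_. 1)"] by simp
  assume ?II
  thus ?P
  proof
    assume h: "A *\<^sub>v vec n (\<lambda>_. 1) = rho A \<cdot>\<^sub>v vec n (\<lambda>_. 1)"
    have "(\<Sum>k<n. A$$(i,k)) = rho A" if "i < n" for i
    proof -
      have "(A *\<^sub>v vec n (\<lambda>_. 1)) $ i = (rho A \<cdot>\<^sub>v vec n (\<lambda>_. 1)) $ i" using h by simp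
      thus ?thesis using mv1[OF that] that by simp
    qed
    thus ?P by auto
  next
    assume "\<exists>D \<in> carrier_mat n n. diagonal_mat D \<and> (\<forall>i<n. D $$ (i, i) \<ge> 0) \<and> det D \<noteq> 0
                      \<and> D * A = mat n n (\<lambda>_. 1)"
    then obtain D where D: "D \<in> carrier_mat n n" "diagonal_mat D" "D * A = mat n n (\<lambda>_. 1)" by auto
    have e: "D$$(i,i) * A$$(i,j) = 1" if ij: "i < n" "j < n" for i j
    proof -
      have "(D * A) $$ (i,j) = 1" using D(3) ij by simp
      moreover have "(D * A) $$ (i,j) = (\<Sum>k<n. D$$(i,k) * A$$(k,j))" by (rule mult_entry[OF D(1) A ij])
      moreover have "(\<Sum>k<n. D$$(i,k) * A$$(k,j)) = (\<Sum>k<n. if k = i then D$$(i,i) * A$$(i,j) else 0)"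
      proof (rule sum.cong)
        fix k assume k: "k \<in> {..<n}"
        show "D$$(i,k) * A$$(k,j) = (if k = i then D$$(i,i) * A$$(i,j) else 0)"
          using D(1,2) k ij unfolding diagonal_mat_def by auto
      qed simp
      ultimately show ?thesis using ij by simp
    qed
    have "A$$(i,j) = A$$(i,0)" if ij: "i < n" "j < n" for i j
    proof -
      have "D$$(i,i) * A$$(i,j) = D$$(i,i) * A$$(i,0)" using e[OF ij] e[OF ij(1) n] by simp
      moreover have "D$$(i,i) \<noteq> 0" using e[OF ij] by auto
      ultimately show ?thesis by simp
    qed
    thus ?P by blast
  qed
next
  have mv1: "(A *\<^sub>v vec n (\<lambda>_. 1)) $ i = (\<Sum>k<n. A$$(i,k))" if "i < n" for i
    using mv_entry[OF A _ that, of "vec n (\<lambda>_. 1)"] by simp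
  assume P: ?P
  show ?II
  proof (cases "\<forall>i<n. \<forall>j<n. (\<Sum>k<n. A$$(i,k)) = (\<Sum>k<n. A$$(j,k))")
    case True
    define r where "r = (\<Sum>k<n. A$$(0,k))"
    have ri: "\<forall>i<n. (\<Sum>j<n. A$$(i,j)) = r" using True n unfolding r_def by blast
    have "rho A = (\<Sum>i<n. \<Sum>j<n. A $$ (i, j)) / real n"
      by (rule P_rho[OF A pos n P A_in_Omega[OF A]])
    also have "(\<Sum>i<n. \<Sum>j<n. A $$ (i, j)) = real n * r" using ri by simp
    finally have rr: "rho A = r" using n by simp
    have "A *\<^sub>v vec n (\<lambda>_. 1) = rho A \<cdot>\<^sub>v vec n (\<lambda>_. 1)"
      by (rule eq_vecI) (use A mv1 ri rr in auto)
    thus ?thesis by blast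
  next
    case False
    hence c: "\<forall>i<n. \<forall>j<n. A$$(i,j) = A$$(i,0)" using P by blast
    define D where "D = mat n n (\<lambda>(i,j). if i = j then 1 / A$$(i,0) else 0)"
    have Dc: "D \<in> carrier_mat n n" unfolding D_def by simp
    have dg: "diagonal_mat D" unfolding diagonal_mat_def D_def by auto
    have nn: "\<forall>i<n. D $$ (i, i) \<ge> 0" unfolding D_def using pos n by (auto simp: less_imp_le)
    have ut: "upper_triangular D" unfolding upper_triangular_def D_def by auto
    have "det D = prod_list (diag_mat D)" by (rule det_upper_triangular[OF ut Dc])
    moreover have "0 \<notin> set (diag_mat D)" unfolding diag_mat_def D_def using pos n by fastforce
    ultimately have dt: "det D \<noteq> 0" by (simp add: prod_list_zero_iff)
    have DA: "D * A = mat n n (\<lambda>_. 1)"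
    proof (rule eq_matI)
      fix i j assume ij: "i < dim_row (mat n n (\<lambda>_. 1::real))" "j < dim_col (mat n n (\<lambda>_. 1::real))"
      hence ij: "i < n" "j < n" by auto
      have "(D * A) $$ (i,j) = (\<Sum>k<n. D$$(i,k) * A$$(k,j))" by (rule mult_entry[OF Dc A ij])
      also have "\<dots> = (\<Sum>k<n. if k = i then 1 / A$$(i,0) * A$$(i,j) else 0)"
        by (rule sum.cong) (use ij in \<open>auto simp: D_def\<close>)
      also have "\<dots> = 1 / A$$(i,0) * A$$(i,j)" using ij by simp
      also have "\<dots> = 1"
      proof -
        have "A$$(i,j) = A$$(i,0)" using c ij by blast
        moreover have "A$$(i,0) > 0" using pos ij n by blast
        ultimately show ?thesis by simp
      qed
      finally show "(D * A) $$ (i,j) = mat n n (\<lambda>_. 1) $$ (i,j)" using ij by simp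
    qed (use Dc A in auto)
    show ?thesis using Dc dg nn dt DA by blast
  qed
qed



theorem theorem3p2:
  fixes A :: "real mat" and n :: nat
  assumes "n \<ge> 1" and "A \<in> carrier_mat n n"
    and "\<forall>i<n. \<forall>j<n. A $$ (i, j) > 0"
  shows "((\<Sum>i<n. \<Sum>j<n. A $$ (i, j)) / real n = Max (rho ` Omega n A)
           \<longleftrightarrow> (A *\<^sub>v vec n (\<lambda>_. 1) = rho A \<cdot>\<^sub>v vec n (\<lambda>_. 1)
                \<or> (\<exists>D \<in> carrier_mat n n. diagonal_mat D \<and> (\<forall>i<n. D $$ (i, i) \<ge> 0) \<and> det D \<noteq> 0
                      \<and> D * A = mat n n (\<lambda>_. 1))))
       \<and> ((A *\<^sub>v vec n (\<lambda>_. 1) = rho A \<cdot>\<^sub>v vec n (\<lambda>_. 1)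
                \<or> (\<exists>D \<in> carrier_mat n n. diagonal_mat D \<and> (\<forall>i<n. D $$ (i, i) \<ge> 0) \<and> det D \<noteq> 0
                      \<and> D * A = mat n n (\<lambda>_. 1)))
           \<longleftrightarrow> (\<Sum>i<n. \<Sum>j<n. A $$ (i, j)) / real n = Min (rho ` Omega n A))"
proof -
  have n: "n > 0" using assms(1) by simp
  note A = assms(2) and pos = assms(3)
  define avg where "avg = (\<Sum>i<n. \<Sum>j<n. A $$ (i, j)) / real n"
  define P where "P = ((\<forall>i<n. \<forall>j<n. (\<Sum>k<n. A$$(i,k)) = (\<Sum>k<n. A$$(j,k))) \<or> (\<forall>i<n. \<forall>j<n. A$$(i,j) = A$$(i,0)))"
  have fin: "finite (rho ` Omega n A)" using finite_Omega by simp
  have ne: "rho ` Omega n A \<noteq> {}" using A_in_Omega[OF A] by auto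
  have maxP: "avg = Max (rho ` Omega n A) \<longleftrightarrow> P"
  proof
    assume h: "avg = Max (rho ` Omega n A)"
    show P
    proof (rule ccontr)
      assume nP: "\<not> P"
      obtain B where B: "B \<in> Omega n A" "0 < 1 * (rho B - avg)"
        using strict_exists[OF A pos n _ _, of 1] nP unfolding P_def avg_def by auto
      have "rho B \<le> Max (rho ` Omega n A)" using fin B(1) by simp
      thus False using h B(2) by simp
    qed
  next
    assume P
    hence "rho ` Omega n A = {avg}" using P_rho[OF A pos n] ne unfolding P_def avg_def by auto
    thus "avg = Max (rho ` Omega n A)" by simp
  qed
  have minP: "avg = Min (rho ` Omega n A) \<longleftrightarrow> P"
  proof
    assume h: "avg = Min (rho ` Omega n A)"
    show P
    proof (rule ccontr)
      assume nP: "\<not> P"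
      obtain B where B: "B \<in> Omega n A" "0 < (-1) * (rho B - avg)"
        using strict_exists[OF A pos n _ _, of "-1"] nP unfolding P_def avg_def by auto
      have "Min (rho ` Omega n A) \<le> rho B" using fin B(1) by simp
      thus False using h B(2) by simp
    qed
  next
    assume P
    hence "rho ` Omega n A = {avg}" using P_rho[OF A pos n] ne unfolding P_def avg_def by auto
    thus "avg = Min (rho ` Omega n A)" by simp
  qed
  show ?thesis using maxP minP II_iff_P[OF A pos n] unfolding avg_def P_def by blast
qed


end
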